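(* Let $M\ge2$, $n_1,\dots,n_M\ge2$, $\mathcal S=\prod_{j=1}^M\{1,\dots,n_j\}$, and $Q=\prod_{i=1}^M n_i-\sum_{i=1}^M n_i+M-1$. Define, for $I\subseteq\{1,\dots,M\}$, $$c_{\{1,\dots,M\}}=1,\qquad c_I=\frac{M-1-\sum_{i\in I}n_i}{Q}\quad (I\ne\{1,\dots,M\}),$$ and let $C$ be the $\mathcal S\times\mathcal S$ matrix with $C_{z,z'}=c_{A(z,z')}$, where $A(z,z')$ is the set of indices at which $z$ and $z'$ have equal coordinates. Let $\lambda_J$, $J\subseteq\{1,\dots,M\}$, be given by $$\lambda_J=\sum_{I\subseteq\{1,\dots,M\}}(-1)^{\#(J^C\cap I^C)}\,c_I\prod_{j\in J\cap I^C}(n_j-1).$$ Then $\lambda_J=\dfrac{\prod_{i=1}^M n_i}{Q}$ for every $J$ with $\#J<M-1$, and $\lambda_J=0$ for every $J$ with $\#J\ge M-1$. Consequently the maximum eigenvalue of $C$ is $$\lambda_{\max}=\frac{\prod_{i=1}^M n_i}{\prod_{i=1}^M n_i-\sum_{i=1}^M n_i+M-1}.$$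
   Context: $I^C=\{1,\dots,M\}\setminus I$; $\#$ denotes cardinality; empty products equal $1$. The eigenvalues of a matrix of this form (entries depending only on the agreement set of the two strata) are exactly the $\lambda_J$ with multiplicities $\prod_{j\notin J}(n_j-1)$. (In the paper, $C$ is the conjectured asymptotic correlation matrix of normalized within-stratum imbalances under Pocock–Simon minimization with equally prevalent strata.) *)

theory Defs
  imports Complex_Main "HOL-Library.FuncSet"
begin

definition strata :: "nat \<Rightarrow> (nat \<Rightarrow> nat) \<Rightarrow> (nat \<Rightarrow> nat) set" where
  "strata M n = PiE {1..M} (\<lambda>j. {1..n j})"

definition agree :: "nat \<Rightarrow> (nat \<Rightarrow> nat) \<Rightarrow> (nat \<Rightarrow> nat) \<Rightarrow> nat set" where
  "agree M z z' = {j \<in> {1..M}. z j = z' j}"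

definition Qval :: "nat \<Rightarrow> (nat \<Rightarrow> nat) \<Rightarrow> real" where
  "Qval M n = (\<Prod>i\<in>{1..M}. real (n i)) - (\<Sum>i\<in>{1..M}. real (n i)) + real M - 1"

definition cI :: "nat \<Rightarrow> (nat \<Rightarrow> nat) \<Rightarrow> nat set \<Rightarrow> real" where
  "cI M n I = (if I = {1..M} then 1
               else (real M - 1 - (\<Sum>i\<in>I. real (n i))) / Qval M n)"

definition Cmat :: "nat \<Rightarrow> (nat \<Rightarrow> nat) \<Rightarrow> (nat \<Rightarrow> nat) \<Rightarrow> (nat \<Rightarrow> nat) \<Rightarrow> real" where
  "Cmat M n z z' = cI M n (agree M z z')"

definition lam :: "nat \<Rightarrow> (nat \<Rightarrow> nat) \<Rightarrow> nat set \<Rightarrow> real" where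
  "lam M n J = (\<Sum>I\<in>Pow {1..M}.
      (-1) ^ card (({1..M} - J) \<inter> ({1..M} - I)) * cI M n I
        * (\<Prod>j\<in>J \<inter> ({1..M} - I). real (n j) - 1))"

definition is_eigenvalue :: "'a set \<Rightarrow> ('a \<Rightarrow> 'a \<Rightarrow> real) \<Rightarrow> real \<Rightarrow> bool" where
  "is_eigenvalue S A \<mu> \<longleftrightarrow> (\<exists>v :: 'a \<Rightarrow> real. (\<exists>z\<in>S. v z \<noteq> 0) \<and>
      (\<forall>z\<in>S. (\<Sum>z'\<in>S. A z z' * v z') = \<mu> * v z))"

definition is_max_eigenvalue :: "'a set \<Rightarrow> ('a \<Rightarrow> 'a \<Rightarrow> real) \<Rightarrow> real \<Rightarrow> bool" where
  "is_max_eigenvalue S A \<mu> \<longleftrightarrow> is_eigenvalue S A \<mu> \<and> (\<forall>\<nu>. is_eigenvalue S A \<nu> \<longrightarrow> \<nu> \<le> \<mu>)"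

end

theory Submission
  imports Defs "HOL-Analysis.Convex"
begin


lemma Q_step:
  "Qval (Suc m) n = Qval m n + ((\<Prod>i\<in>{1..m}. real (n i)) - 1) * (real (n (Suc m)) - 1)"
  unfolding Qval_def
  by (simp add: prod.cl_ivl_Suc sum.cl_ivl_Suc algebra_simps)

lemma Q_ge1:
  assumes "m \<ge> 2" "\<forall>j\<in>{1..m}. n j \<ge> 2"
  shows "Qval m n \<ge> 1"
  using assms
proof (induction m rule: nat_induct_at_least)
  case base
  have "Qval 2 n = (real (n 1) - 1) * (real (n 2) - 1)"
    unfolding Qval_def by (simp add: numeral_2_eq_2 prod.cl_ivl_Suc sum.cl_ivl_Suc algebra_simps)
  moreover have "real (n 1) - 1 \<ge> 1" "real (n 2) - 1 \<ge> 1" using base by auto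
  ultimately show ?case using mult_mono[of 1 "real (n 1) - 1" 1 "real (n 2) - 1"] by simp
next
  case (Suc m)
  have nn: "n j \<ge> 2" if "j \<in> {1..Suc m}" for j using Suc.prems that by blast
  have "(\<Prod>i\<in>{1..m}. real (n i)) \<ge> 1"
  proof (intro prod_ge_1)
    fix i assume "i \<in> {1..m}"
    hence "n i \<ge> 2" using nn by auto
    thus "1 \<le> real (n i)" by simp
  qed
  moreover have "n (Suc m) \<ge> 2" using nn by simp
  hence "real (n (Suc m)) - 1 \<ge> 0" by simp
  moreover have "\<forall>j\<in>{1..m}. n j \<ge> 2" using nn by auto
  hence "Qval m n \<ge> 1" using Suc.IH by blast
  ultimately have "((\<Prod>i\<in>{1..m}. real (n i)) - 1) * (real (n (Suc m)) - 1) \<ge> 0" "Qval m n \<ge> 1"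
    by (simp_all add: mult_nonneg_nonneg)
  thus ?case unfolding Q_step by linarith
qed


lemma W_eq:
  fixes N J I :: "nat set" and n :: "nat \<Rightarrow> nat"
  assumes "finite N"
  shows "(-1) ^ card ((N - J) \<inter> (N - I)) * (\<Prod>j\<in>J \<inter> (N - I). real (n j) - 1)
     = (\<Prod>j\<in>N - I. (if j \<in> J then real (n j) - 1 else -1 :: real))"
proof -
  let ?w = "\<lambda>j. (if j \<in> J then real (n j) - 1 else -1 :: real)"
  have "(\<Prod>j\<in>N - I. ?w j) = (\<Prod>j\<in>(N - I) \<inter> J. ?w j) * (\<Prod>j\<in>(N - I) - J. ?w j)"
    by (rule prod.Int_Diff) (use assms in simp)
  also have "(\<Prod>j\<in>(N - I) \<inter> J. ?w j) = (\<Prod>j\<in>J \<inter> (N - I). real (n j) - 1)"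
    by (rule prod.cong) auto
  also have "(\<Prod>j\<in>(N - I) - J. ?w j) = (\<Prod>j\<in>(N - J) \<inter> (N - I). -1)"
    by (rule prod.cong) auto
  also have "\<dots> = (-1) ^ card ((N - J) \<inter> (N - I))" by simp
  finally show ?thesis by simp
qed

lemma sum_W:
  fixes N :: "nat set" and w :: "nat \<Rightarrow> real"
  assumes "finite N"
  shows "(\<Sum>I\<in>Pow N. (\<Prod>j\<in>N - I. w j)) = (\<Prod>j\<in>N. 1 + w j)"
  using prod_add[OF assms, of "\<lambda>_. 1" w] by simp

lemma sum_W_mem:
  fixes N :: "nat set" and w :: "nat \<Rightarrow> real"
  assumes "finite N" "i \<in> N"
  shows "(\<Sum>I\<in>Pow N. (if i \<in> I then 1 else 0) * (\<Prod>j\<in>N - I. w j)) = (\<Prod>j\<in>N - {i}. 1 + w j)"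
proof -
  let ?a = "\<lambda>j. if j = i then 0 else 1 :: real"
  have pa: "(\<Prod>j\<in>I. ?a j) = (if i \<in> I then 0 else 1)" if "I \<in> Pow N" for I
  proof -
    have fI: "finite I" using that assms(1) finite_subset by auto
    show ?thesis
    proof (cases "i \<in> I")
      case True thus ?thesis using fI by (simp add: prod_zero_iff)
    next
      case False
      have "(\<Prod>j\<in>I. ?a j) = 1" using False by (intro prod.neutral) auto
      thus ?thesis using False by simp
    qed
  qed
  have "(\<Sum>I\<in>Pow N. (\<Prod>j\<in>I. ?a j) * (\<Prod>j\<in>N - I. w j)) = (\<Prod>j\<in>N. ?a j + w j)"
    using prod_add[OF assms(1), of ?a w] by simp
  also have "\<dots> = (?a i + w i) * (\<Prod>j\<in>N - {i}. ?a j + w j)"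
    using assms by (simp add: prod.remove)
  also have "(\<Prod>j\<in>N - {i}. ?a j + w j) = (\<Prod>j\<in>N - {i}. 1 + w j)"
    by (rule prod.cong) auto
  finally have e0: "(\<Sum>I\<in>Pow N. (\<Prod>j\<in>I. ?a j) * (\<Prod>j\<in>N - I. w j)) = w i * (\<Prod>j\<in>N - {i}. 1 + w j)"
    by simp
  have "(\<Sum>I\<in>Pow N. (if i \<in> I then 0 else 1) * (\<Prod>j\<in>N - I. w j)) = (\<Sum>I\<in>Pow N. (\<Prod>j\<in>I. ?a j) * (\<Prod>j\<in>N - I. w j))"
    by (intro sum.cong refl) (simp only: pa)
  with e0 have e1: "(\<Sum>I\<in>Pow N. (if i \<in> I then 0 else 1) * (\<Prod>j\<in>N - I. w j)) = w i * (\<Prod>j\<in>N - {i}. 1 + w j)"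
    by simp
  have e2: "(\<Sum>I\<in>Pow N. (\<Prod>j\<in>N - I. w j)) = (1 + w i) * (\<Prod>j\<in>N - {i}. 1 + w j)"
    using sum_W[OF assms(1), of w] assms by (simp add: prod.remove)
  have "(\<Sum>I\<in>Pow N. (if i \<in> I then 1 else 0) * (\<Prod>j\<in>N - I. w j))
      = (\<Sum>I\<in>Pow N. (\<Prod>j\<in>N - I. w j)) - (\<Sum>I\<in>Pow N. (if i \<in> I then 0 else 1) * (\<Prod>j\<in>N - I. w j))"
    by (simp add: sum_subtractf[symmetric]) (rule sum.cong, auto)
  also have "\<dots> = (\<Prod>j\<in>N - {i}. 1 + w j)" using e1 e2 by (simp add: algebra_simps)
  finally show ?thesis .
qed

lemma sum_W_n:
  fixes N :: "nat set" and w g :: "nat \<Rightarrow> real"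
  assumes "finite N"
  shows "(\<Sum>I\<in>Pow N. (\<Sum>i\<in>I. g i) * (\<Prod>j\<in>N - I. w j)) = (\<Sum>i\<in>N. g i * (\<Prod>j\<in>N - {i}. 1 + w j))"
proof -
  have "(\<Sum>I\<in>Pow N. (\<Sum>i\<in>I. g i) * (\<Prod>j\<in>N - I. w j))
     = (\<Sum>I\<in>Pow N. \<Sum>i\<in>N. g i * ((if i \<in> I then 1 else 0) * (\<Prod>j\<in>N - I. w j)))"
  proof (rule sum.cong)
    fix I assume "I \<in> Pow N"
    hence "(\<Sum>i\<in>I. g i) = (\<Sum>i\<in>N. if i \<in> I then g i else 0)"
      using assms by (simp add: sum.If_cases Int_absorb1)
    thus "(\<Sum>i\<in>I. g i) * (\<Prod>j\<in>N - I. w j) = (\<Sum>i\<in>N. g i * ((if i \<in> I then 1 else 0) * (\<Prod>j\<in>N - I. w j)))"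
      by (auto simp: sum_distrib_right intro!: sum.cong)
  qed simp
  also have "\<dots> = (\<Sum>i\<in>N. g i * (\<Sum>I\<in>Pow N. (if i \<in> I then 1 else 0) * (\<Prod>j\<in>N - I. w j)))"
    by (subst sum.swap) (simp add: sum_distrib_left)
  also have "\<dots> = (\<Sum>i\<in>N. g i * (\<Prod>j\<in>N - {i}. 1 + w j))"
    using sum_W_mem[OF assms] by simp
  finally show ?thesis .
qed



lemma cI_split:
  assumes "Qval M n \<noteq> 0"
  shows "cI M n I = (real M - 1 - (\<Sum>i\<in>I. real (n i))) / Qval M n
      + (if I = {1..M} then (\<Prod>i\<in>{1..M}. real (n i)) / Qval M n else 0)"
proof (cases "I = {1..M}")
  case True
  have "(real M - 1 - (\<Sum>i\<in>{1..M}. real (n i))) + (\<Prod>i\<in>{1..M}. real (n i)) = Qval M n"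
    by (simp add: Qval_def)
  hence "(real M - 1 - (\<Sum>i\<in>{1..M}. real (n i))) / Qval M n + (\<Prod>i\<in>{1..M}. real (n i)) / Qval M n = 1"
    using assms by (simp add: add_divide_distrib[symmetric])
  thus ?thesis using True by (simp add: cI_def)
next
  case False thus ?thesis by (simp add: cI_def)
qed

lemma W_eq2:
  fixes N J I :: "nat set" and n :: "nat \<Rightarrow> nat" and c :: real
  assumes "finite N"
  shows "(-1) ^ card ((N - J) \<inter> (N - I)) * c * (\<Prod>j\<in>J \<inter> (N - I). real (n j) - 1)
     = c * (\<Prod>j\<in>N - I. (if j \<in> J then real (n j) - 1 else -1 :: real))"
  by (simp only: W_eq[OF assms, symmetric] mult.assoc) (rule mult.left_commute)

lemma lam_formula:
  fixes J :: "nat set" and M :: nat and n :: "nat \<Rightarrow> nat"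
  assumes Q: "Qval M n \<noteq> 0"
  defines "w \<equiv> \<lambda>j. (if j \<in> J then real (n j) - 1 else -1 :: real)"
  shows "lam M n J = ((real M - 1) * (\<Prod>j\<in>{1..M}. 1 + w j)
      - (\<Sum>i\<in>{1..M}. real (n i) * (\<Prod>j\<in>{1..M} - {i}. 1 + w j))) / Qval M n
      + (\<Prod>i\<in>{1..M}. real (n i)) / Qval M n"
proof -
  let ?N = "{1..M::nat}"
  let ?W = "\<lambda>I. (\<Prod>j\<in>?N - I. w j)"
  let ?P = "(\<Prod>i\<in>{1..M}. real (n i))"
  let ?Q = "Qval M n"
  have "lam M n J = (\<Sum>I\<in>Pow ?N. cI M n I * ?W I)"
    unfolding lam_def
    unfolding w_def by (simp only: W_eq2[OF finite_atLeastAtMost])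
  also have "\<dots> = (\<Sum>I\<in>Pow ?N. (real M - 1 - (\<Sum>i\<in>I. real (n i))) / ?Q * ?W I
       + (if I = ?N then ?P / ?Q else 0) * ?W I)"
    by (intro sum.cong refl) (simp add: cI_split[OF Q] algebra_simps)
  also have "\<dots> = (\<Sum>I\<in>Pow ?N. (real M - 1 - (\<Sum>i\<in>I. real (n i))) / ?Q * ?W I)
       + (\<Sum>I\<in>Pow ?N. (if I = ?N then ?P / ?Q else 0) * ?W I)"
    by (rule sum.distrib)
  also have "(\<Sum>I\<in>Pow ?N. (if I = ?N then ?P / ?Q else 0) * ?W I) = ?P / ?Q"
  proof -
    have "(\<Sum>I\<in>Pow ?N. (if I = ?N then ?P / ?Q else 0) * ?W I) = (\<Sum>I\<in>Pow ?N. if ?N = I then ?P / ?Q * ?W I else 0)"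
      by (intro sum.cong) auto
    also have "\<dots> = ?P / ?Q * ?W ?N" by (subst sum.delta') auto
    finally show ?thesis by simp
  qed
  also have "(\<Sum>I\<in>Pow ?N. (real M - 1 - (\<Sum>i\<in>I. real (n i))) / ?Q * ?W I)
     = ((real M - 1) * (\<Sum>I\<in>Pow ?N. ?W I) - (\<Sum>I\<in>Pow ?N. (\<Sum>i\<in>I. real (n i)) * ?W I)) / ?Q"
  proof -
    have "(\<Sum>I\<in>Pow ?N. (real M - 1 - (\<Sum>i\<in>I. real (n i))) / ?Q * ?W I)
       = (\<Sum>I\<in>Pow ?N. ((real M - 1) * ?W I - (\<Sum>i\<in>I. real (n i)) * ?W I) / ?Q)"
      by (intro sum.cong refl) (simp only: times_divide_eq_left left_diff_distrib)
    also have "\<dots> = (\<Sum>I\<in>Pow ?N. ((real M - 1) * ?W I - (\<Sum>i\<in>I. real (n i)) * ?W I)) / ?Q"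
      by (simp only: sum_divide_distrib)
    also have "(\<Sum>I\<in>Pow ?N. ((real M - 1) * ?W I - (\<Sum>i\<in>I. real (n i)) * ?W I))
       = (real M - 1) * (\<Sum>I\<in>Pow ?N. ?W I) - (\<Sum>I\<in>Pow ?N. (\<Sum>i\<in>I. real (n i)) * ?W I)"
      by (simp only: sum_subtractf sum_distrib_left)
    finally show ?thesis .
  qed
  also have "(\<Sum>I\<in>Pow ?N. ?W I) = (\<Prod>j\<in>?N. 1 + w j)" by (rule sum_W) simp
  also have "(\<Sum>I\<in>Pow ?N. (\<Sum>i\<in>I. real (n i)) * ?W I) = (\<Sum>i\<in>?N. real (n i) * (\<Prod>j\<in>?N - {i}. 1 + w j))"
    by (rule sum_W_n) simp
  finally show ?thesis .
qed



lemma prod_onew: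
  assumes "finite A"
  shows "(\<Prod>j\<in>A. 1 + (if j \<in> J then real (n j) - 1 else -1 :: real))
       = (if A \<subseteq> J then (\<Prod>j\<in>A. real (n j)) else 0)"
proof (cases "A \<subseteq> J")
  case True thus ?thesis by (auto intro!: prod.cong)
next
  case False
  then obtain k where "k \<in> A" "k \<notin> J" by auto
  thus ?thesis using assms False by (auto simp: prod_zero_iff intro!: bexI[of _ k])
qed

lemma lam_values:
  fixes M :: nat and n :: "nat \<Rightarrow> nat"
  assumes "M \<ge> 2" and "\<forall>j\<in>{1..M}. n j \<ge> 2"
  shows "(\<forall>J. J \<subseteq> {1..M} \<longrightarrow> card J < M - 1 \<longrightarrow>
            lam M n J = (\<Prod>i\<in>{1..M}. real (n i)) / Qval M n)
       \<and> (\<forall>J. J \<subseteq> {1..M} \<longrightarrow> card J \<ge> M - 1 \<longrightarrow> lam M n J = 0)"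
proof -
  let ?N = "{1..M::nat}"
  let ?P = "(\<Prod>i\<in>{1..M}. real (n i))"
  have Q: "Qval M n \<noteq> 0" using Q_ge1[OF assms] by auto
  have cN: "card ?N = M" by simp
  have Prem: "real (n i) * (\<Prod>j\<in>?N - {i}. real (n j)) = ?P" if "i \<in> ?N" for i
    using that by (simp add: prod.remove)
  have L: "lam M n J = ((real M - 1) * (if ?N \<subseteq> J then ?P else 0)
      - (\<Sum>i\<in>?N. if ?N - {i} \<subseteq> J then ?P else 0)) / Qval M n + ?P / Qval M n" for J
  proof -
    let ?w = "\<lambda>j. if j \<in> J then real (n j) - 1 else -1 :: real"
    have A1: "(\<Prod>j\<in>?N. 1 + ?w j) = (if ?N \<subseteq> J then ?P else 0)"
      by (rule prod_onew) simp
    have A2: "(\<Sum>i\<in>?N. real (n i) * (\<Prod>j\<in>?N - {i}. 1 + ?w j)) = (\<Sum>i\<in>?N. if ?N - {i} \<subseteq> J then ?P else 0)"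
    proof (rule sum.cong[OF refl])
      fix i assume i: "i \<in> ?N"
      have "(\<Prod>j\<in>?N - {i}. 1 + ?w j) = (if ?N - {i} \<subseteq> J then (\<Prod>j\<in>?N - {i}. real (n j)) else 0)"
        by (rule prod_onew) simp
      thus "real (n i) * (\<Prod>j\<in>?N - {i}. 1 + ?w j) = (if ?N - {i} \<subseteq> J then ?P else 0)"
        using Prem[OF i] by simp
    qed
    show ?thesis by (simp only: lam_formula[OF Q, of J] A1 A2)
  qed
  show ?thesis
  proof (intro conjI allI impI)
    fix J assume J: "J \<subseteq> ?N" "card J < M - 1"
    have "\<not> ?N \<subseteq> J" using J card_mono[of J ?N] by auto
    moreover have "\<not> ?N - {i} \<subseteq> J" if "i \<in> ?N" for i
    proof
      assume "?N - {i} \<subseteq> J"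
      hence "card (?N - {i}) \<le> card J" using J(1) finite_subset by (intro card_mono) auto
      moreover have "card (?N - {i}) = M - 1" using that by simp
      ultimately show False using J(2) by linarith
    qed
    ultimately show "lam M n J = ?P / Qval M n" unfolding L by simp
  next
    fix J assume J: "J \<subseteq> ?N" "M - 1 \<le> card J"
    show "lam M n J = 0"
    proof (cases "J = ?N")
      case True
      have "(\<Sum>i\<in>?N. if ?N - {i} \<subseteq> J then ?P else 0) = real M * ?P"
        using True by simp
      thus ?thesis unfolding L using True Q by (simp add: field_simps)
    next
      case False
      then obtain k where k: "k \<in> ?N" "k \<notin> J" using J by blast
      have "J \<subseteq> ?N - {k}" using J k by auto
      have "card (?N - {k}) = M - 1" using k by simp
      have Jk: "J = ?N - {k}"
      proof (rule card_subset_eq)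
        show "finite (?N - {k})" by simp
        show "J \<subseteq> ?N - {k}" by fact
        have "card J \<le> card (?N - {k})" using \<open>J \<subseteq> ?N - {k}\<close> by (intro card_mono) auto
        thus "card J = card (?N - {k})" using J(2) \<open>card (?N - {k}) = M - 1\<close> by linarith
      qed
      have "(\<Sum>i\<in>?N. if ?N - {i} \<subseteq> J then ?P else 0) = (\<Sum>i\<in>?N. if i = k then ?P else 0)"
      proof (rule sum.cong[OF refl])
        fix i assume i: "i \<in> ?N"
        have "(?N - {i} \<subseteq> J) = (i = k)" using Jk k i by blast
        thus "(if ?N - {i} \<subseteq> J then ?P else 0) = (if i = k then ?P else 0)" by simp
      qed
      also have "\<dots> = ?P" using k by simp
      finally have SS: "(\<Sum>i\<in>?N. if ?N - {i} \<subseteq> J then ?P else 0) = ?P" .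
      have nNJ: "\<not> ?N \<subseteq> J" using k by blast
      show ?thesis unfolding L SS using nNJ by (simp add: diff_divide_distrib)
    qed
  qed
qed



lemma QC:
  assumes Q: "Qval M n \<noteq> 0" and z: "z \<in> strata M n" and z': "z' \<in> strata M n"
  shows "Qval M n * Cmat M n z z' = (real M - 1) - (\<Sum>i\<in>{1..M}. if z i = z' i then real (n i) else 0)
     + (if z = z' then (\<Prod>i\<in>{1..M}. real (n i)) else 0)"
proof (cases "z = z'")
  case True
  hence "agree M z z' = {1..M}" unfolding agree_def by auto
  hence c1: "Cmat M n z z' = 1" unfolding Cmat_def cI_def by simp
  have s1: "(\<Sum>i\<in>{1..M}. if z i = z' i then real (n i) else 0) = (\<Sum>i\<in>{1..M}. real (n i))"
    using True by simp
  have q: "Qval M n = (\<Prod>i\<in>{1..M}. real (n i)) - (\<Sum>i\<in>{1..M}. real (n i)) + real M - 1"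
    by (rule Qval_def)
  have p1: "(if z = z' then (\<Prod>i\<in>{1..M}. real (n i)) else 0) = (\<Prod>i\<in>{1..M}. real (n i))"
    unfolding True by (rule if_P[OF refl])
  have "Qval M n * Cmat M n z z' = (real M - 1) - (\<Sum>i\<in>{1..M}. real (n i)) + (\<Prod>i\<in>{1..M}. real (n i))"
    unfolding c1 Qval_def by simp
  thus ?thesis by (subst s1, subst p1)
next
  case False
  have "agree M z z' \<noteq> {1..M}"
  proof
    assume a: "agree M z z' = {1..M}"
    have zi: "z i = z' i" if "i \<in> {1..M}" for i
    proof -
      have "i \<in> agree M z z'" using a that by simp
      thus ?thesis unfolding agree_def by simp
    qed
    have "z = z'"
      by (rule PiE_ext[OF z[unfolded strata_def] z'[unfolded strata_def]]) (rule zi)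
    thus False using False by simp
  qed
  moreover have "(\<Sum>i\<in>agree M z z'. real (n i)) = (\<Sum>i\<in>{1..M}. if z i = z' i then real (n i) else 0)"
    unfolding agree_def by (rule sum.inter_filter) simp
  ultimately show ?thesis using False Q by (simp add: Cmat_def cI_def)
qed

lemma per_coord:
  fixes v :: "(nat \<Rightarrow> nat) \<Rightarrow> real"
  assumes i: "i \<in> {1..M}"
  shows "(\<Sum>z\<in>strata M n. v z)^2 \<le> real (n i) *
     (\<Sum>z\<in>strata M n. \<Sum>z'\<in>strata M n. (if z i = z' i then 1 else 0) * v z * v z')"
proof -
  let ?S = "strata M n"
  let ?A = "{1..n i}"
  define T where "T a = (\<Sum>z\<in>{z\<in>?S. z i = a}. v z)" for a
  have fS: "finite ?S" unfolding strata_def by (intro finite_PiE) auto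
  have img: "(\<lambda>z. z i) ` ?S \<subseteq> ?A" using i unfolding strata_def by auto
  have sumv: "(\<Sum>z\<in>?S. v z) = (\<Sum>a\<in>?A. T a)"
    unfolding T_def using sum.group[OF fS _ img, of v] by simp
  have inner: "(\<Sum>z'\<in>?S. (if z i = z' i then 1 else 0) * v z * v z') = v z * T (z i)" for z
    unfolding T_def using fS
    by (auto simp: sum.inter_filter sum_distrib_left intro!: sum.cong)
  have "(\<Sum>z\<in>?S. \<Sum>z'\<in>?S. (if z i = z' i then 1 else 0) * v z * v z') = (\<Sum>z\<in>?S. v z * T (z i))"
    using inner by simp
  also have "\<dots> = (\<Sum>a\<in>?A. \<Sum>z\<in>{z\<in>?S. z i = a}. v z * T (z i))"
    using sum.group[OF fS _ img, of "\<lambda>z. v z * T (z i)"] by simp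
  also have "\<dots> = (\<Sum>a\<in>?A. (T a)^2)"
    unfolding T_def by (simp add: power2_eq_square sum_distrib_right)
  finally have e: "(\<Sum>z\<in>?S. \<Sum>z'\<in>?S. (if z i = z' i then 1 else 0) * v z * v z') = (\<Sum>a\<in>?A. (T a)^2)" .
  have "(\<Sum>a\<in>?A. T a)^2 \<le> (\<Sum>a\<in>?A. (T a)^2) * card ?A"
    by (rule sum_squared_le_sum_of_squares)
  thus ?thesis unfolding sumv e by (simp add: mult.commute)
qed



lemma dsum_expand:
  fixes v :: "'a \<Rightarrow> real"
  shows "(\<Sum>z\<in>S. \<Sum>z'\<in>S. (a - B z z' + D z z') * v z * v z')
    = a * (\<Sum>z\<in>S. \<Sum>z'\<in>S. v z * v z') - (\<Sum>z\<in>S. \<Sum>z'\<in>S. B z z' * v z * v z')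
      + (\<Sum>z\<in>S. \<Sum>z'\<in>S. D z z' * v z * v z')"
  by (simp add: algebra_simps sum.distrib sum_subtractf sum_distrib_left)

lemma upper:
  assumes M: "M \<ge> 2" and nn: "\<forall>j\<in>{1..M}. n j \<ge> 2"
    and ev: "is_eigenvalue (strata M n) (Cmat M n) \<mu>"
  shows "\<mu> \<le> (\<Prod>i\<in>{1..M}. real (n i)) / Qval M n"
proof -
  let ?S = "strata M n"
  let ?N = "{1..M::nat}"
  let ?P = "(\<Prod>i\<in>{1..M}. real (n i))"
  let ?Q = "Qval M n"
  let ?B = "\<lambda>z z'. (\<Sum>i\<in>?N. if z i = z' i then real (n i) else 0)"
  let ?D = "\<lambda>z z'::nat\<Rightarrow>nat. if z = z' then ?P else 0"
  have Qp: "?Q > 0" using Q_ge1[OF M nn] by simp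
  have fS: "finite ?S" unfolding strata_def by (intro finite_PiE) auto
  obtain v z0 where z0: "z0 \<in> ?S" "v z0 \<noteq> 0"
    and eq: "\<And>z. z \<in> ?S \<Longrightarrow> (\<Sum>z'\<in>?S. Cmat M n z z' * v z') = \<mu> * v z"
    using ev unfolding is_eigenvalue_def by blast
  define V where "V = (\<Sum>z\<in>?S. (v z)^2)"
  have Vp: "V > 0" unfolding V_def
    using z0 fS by (intro sum_pos2[of _ z0]) auto
  have h1: "\<mu> * V = (\<Sum>z\<in>?S. \<Sum>z'\<in>?S. Cmat M n z z' * v z * v z')"
  proof -
    have "\<mu> * V = (\<Sum>z\<in>?S. v z * (\<mu> * v z))"
      unfolding V_def by (simp add: sum_distrib_left power2_eq_square algebra_simps)
    also have "\<dots> = (\<Sum>z\<in>?S. v z * (\<Sum>z'\<in>?S. Cmat M n z z' * v z'))"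
      using eq by simp
    also have "\<dots> = (\<Sum>z\<in>?S. \<Sum>z'\<in>?S. Cmat M n z z' * v z * v z')"
      by (simp add: sum_distrib_left algebra_simps)
    finally show ?thesis .
  qed
  have h2: "?Q * (\<Sum>z\<in>?S. \<Sum>z'\<in>?S. Cmat M n z z' * v z * v z')
      = (\<Sum>z\<in>?S. \<Sum>z'\<in>?S. ((real M - 1) - ?B z z' + ?D z z') * v z * v z')"
    unfolding sum_distrib_left
    by (intro sum.cong refl) (simp add: QC[OF Qp[THEN less_imp_neq, symmetric]] mult.assoc[symmetric])
  have sq: "(\<Sum>z\<in>?S. \<Sum>z'\<in>?S. v z * v z') = (\<Sum>z\<in>?S. v z)^2"
    by (simp add: power2_eq_square sum_product)
  have dd: "(\<Sum>z\<in>?S. \<Sum>z'\<in>?S. ?D z z' * v z * v z') = ?P * V"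
  proof -
    have "(\<Sum>z'\<in>?S. ?D z z' * v z * v z') = ?P * (v z)^2" if "z \<in> ?S" for z
    proof -
      have "(\<Sum>z'\<in>?S. ?D z z' * v z * v z') = (\<Sum>z'\<in>?S. if z = z' then ?P * v z * v z' else 0)"
        by (intro sum.cong) auto
      also have "\<dots> = ?P * (v z)^2" using that fS by (simp add: sum.delta power2_eq_square)
      finally show ?thesis .
    qed
    thus ?thesis unfolding V_def by (simp add: sum_distrib_left)
  qed
  have bb: "(\<Sum>z\<in>?S. \<Sum>z'\<in>?S. ?B z z' * v z * v z')
      = (\<Sum>i\<in>?N. real (n i) * (\<Sum>z\<in>?S. \<Sum>z'\<in>?S. (if z i = z' i then 1 else 0) * v z * v z'))"
  proof -
    have "(\<Sum>z\<in>?S. \<Sum>z'\<in>?S. ?B z z' * v z * v z')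
       = (\<Sum>z\<in>?S. \<Sum>z'\<in>?S. \<Sum>i\<in>?N. real (n i) * ((if z i = z' i then 1 else 0) * v z * v z'))"
      by (intro sum.cong refl) (auto simp: sum_distrib_right intro!: sum.cong)
    also have "\<dots> = (\<Sum>i\<in>?N. \<Sum>z\<in>?S. \<Sum>z'\<in>?S. real (n i) * ((if z i = z' i then 1 else 0) * v z * v z'))"
      by (rule trans[OF sum.cong[OF refl sum.swap] sum.swap])
    also have "\<dots> = (\<Sum>i\<in>?N. real (n i) * (\<Sum>z\<in>?S. \<Sum>z'\<in>?S. (if z i = z' i then 1 else 0) * v z * v z'))"
      by (simp add: sum_distrib_left)
    finally show ?thesis .
  qed
  have "(\<Sum>i\<in>?N. (\<Sum>z\<in>?S. v z)^2) \<le> (\<Sum>i\<in>?N. real (n i) * (\<Sum>z\<in>?S. \<Sum>z'\<in>?S. (if z i = z' i then 1 else 0) * v z * v z'))"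
    by (intro sum_mono per_coord) auto
  hence bge: "real M * (\<Sum>z\<in>?S. v z)^2 \<le> (\<Sum>z\<in>?S. \<Sum>z'\<in>?S. ?B z z' * v z * v z')"
    unfolding bb by simp
  have "?Q * (\<mu> * V) = (real M - 1) * (\<Sum>z\<in>?S. v z)^2 - (\<Sum>z\<in>?S. \<Sum>z'\<in>?S. ?B z z' * v z * v z') + ?P * V"
    unfolding h1 h2 dsum_expand sq dd by simp
  also have "\<dots> \<le> ?P * V"
  proof -
    have "(real M - 1) * (\<Sum>z\<in>?S. v z)^2 = real M * (\<Sum>z\<in>?S. v z)^2 - (\<Sum>z\<in>?S. v z)^2"
      by (simp add: algebra_simps)
    moreover have "(\<Sum>z\<in>?S. v z)^2 \<ge> 0" by simp
    ultimately show ?thesis using bge by linarith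
  qed
  finally have "?Q * \<mu> * V \<le> ?P * V" by (simp add: mult.assoc)
  hence "?Q * \<mu> \<le> ?P" using Vp by simp
  thus ?thesis using Qp by (simp add: pos_le_divide_eq mult.commute)
qed



definition sw :: "nat \<Rightarrow> nat" where "sw a = (if a = 1 then 2 else if a = 2 then 1 else a)"
definition ff :: "nat \<Rightarrow> real" where "ff a = (if a = 1 then 1 else if a = 2 then -1 else 0)"
definition vv :: "(nat \<Rightarrow> nat) \<Rightarrow> real" where "vv z = ff (z 1) * ff (z 2)"
definition sig :: "nat \<Rightarrow> (nat \<Rightarrow> nat) \<Rightarrow> (nat \<Rightarrow> nat)" where "sig k z = z(k := sw (z k))"

lemma sw_sw[simp]: "sw (sw a) = a" by (simp add: sw_def)
lemma ff_sw: "ff (sw a) = - ff a" by (simp add: ff_def sw_def)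

lemma sum_antisym:
  fixes g :: "'a \<Rightarrow> real"
  assumes "\<And>x. x \<in> A \<Longrightarrow> s x \<in> A" "\<And>x. x \<in> A \<Longrightarrow> s (s x) = x" "\<And>x. x \<in> A \<Longrightarrow> g (s x) = - g x"
  shows "sum g A = 0"
proof -
  have "sum g A = sum (\<lambda>x. - g x) A"
    by (rule sum.reindex_bij_witness[of _ s s]) (use assms in auto)
  thus ?thesis by (simp add: sum_negf)
qed

lemma sig_in:
  assumes "z \<in> strata M n" "k \<in> {1..M}" "n k \<ge> 2"
  shows "sig k z \<in> strata M n"
  using assms unfolding strata_def sig_def sw_def by (auto simp: PiE_iff extensional_def)

lemma sig_sig: "sig k (sig k z) = z" unfolding sig_def by auto

lemma vv_sig: "k \<in> {1,2} \<Longrightarrow> vv (sig k z) = - vv z"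
  unfolding vv_def sig_def by (auto simp: ff_sw)

lemma exist:
  assumes M: "M \<ge> 2" and nn: "\<forall>j\<in>{1..M}. n j \<ge> 2"
  shows "is_eigenvalue (strata M n) (Cmat M n) ((\<Prod>i\<in>{1..M}. real (n i)) / Qval M n)"
proof -
  let ?S = "strata M n"
  let ?N = "{1..M::nat}"
  let ?P = "(\<Prod>i\<in>{1..M}. real (n i))"
  let ?Q = "Qval M n"
  have Qp: "?Q > 0" using Q_ge1[OF M nn] by simp
  have fS: "finite ?S" unfolding strata_def by (intro finite_PiE) auto
  have in12: "1 \<in> ?N" "2 \<in> ?N" using M by auto
  have n12: "n 1 \<ge> 2" "n 2 \<ge> 2" using nn in12 by auto
  have s0: "(\<Sum>z'\<in>?S. vv z') = 0"
    by (rule sum_antisym[of _ "sig 1"]) (use sig_in in12 n12 sig_sig vv_sig in auto)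
  have si: "(\<Sum>z'\<in>?S. (if z i = z' i then 1 else 0) * vv z') = 0" if "i \<in> ?N" for z i
  proof -
    define k where "k = (if i = 1 then 2 else (1::nat))"
    have k: "k \<in> ?N" "n k \<ge> 2" "k \<in> {1,2}" "k \<noteq> i" using in12 n12 unfolding k_def by auto
    have "(sig k z') i = z' i" for z' using k(4) unfolding sig_def by simp
    thus ?thesis
      by (intro sum_antisym[of _ "sig k"]) (use sig_in k sig_sig vv_sig in auto)
  qed
  let ?z0 = "(\<lambda>j\<in>?N. 1::nat)"
  have z0: "?z0 \<in> ?S" using nn unfolding strata_def by (auto simp: PiE_iff)
  have v0: "vv ?z0 \<noteq> 0" using in12 unfolding vv_def ff_def by simp
  show ?thesis unfolding is_eigenvalue_def
  proof (intro exI[of _ vv] conjI ballI)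
    show "\<exists>z\<in>?S. vv z \<noteq> 0" using z0 v0 by blast
  next
    fix z assume z: "z \<in> ?S"
    have "?Q * (\<Sum>z'\<in>?S. Cmat M n z z' * vv z')
      = (\<Sum>z'\<in>?S. ((real M - 1) - (\<Sum>i\<in>?N. if z i = z' i then real (n i) else 0)
          + (if z = z' then ?P else 0)) * vv z')"
      unfolding sum_distrib_left
      by (intro sum.cong refl) (simp add: QC[OF Qp[THEN less_imp_neq, symmetric] z] mult.assoc[symmetric])
    also have "\<dots> = (real M - 1) * (\<Sum>z'\<in>?S. vv z')
        - (\<Sum>z'\<in>?S. (\<Sum>i\<in>?N. if z i = z' i then real (n i) else 0) * vv z')
        + (\<Sum>z'\<in>?S. (if z = z' then ?P else 0) * vv z')"
      by (simp add: algebra_simps sum.distrib sum_subtractf sum_distrib_left)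
    also have "(\<Sum>z'\<in>?S. (if z = z' then ?P else 0) * vv z') = ?P * vv z"
      using z fS by (simp add: if_distrib[of "\<lambda>x. x * _"] sum.delta cong: if_cong)
    also have "(\<Sum>z'\<in>?S. (\<Sum>i\<in>?N. if z i = z' i then real (n i) else 0) * vv z')
        = (\<Sum>i\<in>?N. real (n i) * (\<Sum>z'\<in>?S. (if z i = z' i then 1 else 0) * vv z'))"
    proof -
      have "(\<Sum>z'\<in>?S. (\<Sum>i\<in>?N. if z i = z' i then real (n i) else 0) * vv z')
         = (\<Sum>z'\<in>?S. \<Sum>i\<in>?N. real (n i) * ((if z i = z' i then 1 else 0) * vv z'))"
        by (intro sum.cong refl) (auto simp: sum_distrib_right intro!: sum.cong)
      also have "\<dots> = (\<Sum>i\<in>?N. \<Sum>z'\<in>?S. real (n i) * ((if z i = z' i then 1 else 0) * vv z'))"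
        by (rule sum.swap)
      finally show ?thesis by (simp add: sum_distrib_left)
    qed
    also have "\<dots> = 0" using si by simp
    finally have "?Q * (\<Sum>z'\<in>?S. Cmat M n z z' * vv z') = ?P * vv z" using s0 by simp
    thus "(\<Sum>z'\<in>?S. Cmat M n z z' * vv z') = ?P / ?Q * vv z"
      using Qp by (simp add: field_simps)
  qed
qed

theorem lemma1:
  fixes M :: nat and n :: "nat \<Rightarrow> nat"
  assumes "M \<ge> 2" and "\<forall>j\<in>{1..M}. n j \<ge> 2"
  shows "(\<forall>J. J \<subseteq> {1..M} \<longrightarrow> card J < M - 1 \<longrightarrow>
            lam M n J = (\<Prod>i\<in>{1..M}. real (n i)) / Qval M n)
       \<and> (\<forall>J. J \<subseteq> {1..M} \<longrightarrow> card J \<ge> M - 1 \<longrightarrow> lam M n J = 0)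
       \<and> is_max_eigenvalue (strata M n) (Cmat M n)
           ((\<Prod>i\<in>{1..M}. real (n i)) /
            ((\<Prod>i\<in>{1..M}. real (n i)) - (\<Sum>i\<in>{1..M}. real (n i)) + real M - 1))"
proof -
  have e: "((\<Prod>i\<in>{1..M}. real (n i)) - (\<Sum>i\<in>{1..M}. real (n i)) + real M - 1) = Qval M n"
    by (simp add: Qval_def)
  show ?thesis
    unfolding e is_max_eigenvalue_def
    using lam_values[OF assms] exist[OF assms] upper[OF assms] by blast
qed

end
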